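(* Let $\mathcal{D}$ be any basic action theory whose initial theory includes the axiom $$(\star)\quad [\forall \vec x\, \exists \iota \textstyle\bigwedge_i f_i(\iota) = x_i] \land [\forall \iota,\iota'.\ \textstyle\bigwedge_i f_i(\iota) = f_i(\iota') \supset \iota = \iota'],$$ let $\phi$ be any situation-suppressed $\mathcal{L}$-formula, and let $\alpha$ be any sequence of ground action terms. Then $$\frac{1}{\gamma}\sum_{\{s':\phi[s']\}} p(s',do(\alpha,S_0)) \quad\text{and}\quad \frac{1}{\gamma'}\sum_{\vec x}\langle \iota.\ \textstyle\bigwedge_i f_i(\iota) = x_i \land \phi[do(\alpha,\iota)] \to p(do(\alpha,\iota),do(\alpha,S_0))\rangle$$ define the same number (in every $\mathbb{R}$-interpretation satisfying $\mathcal{D}$), where $\gamma,\gamma'$ are the respective numerators with $\phi$ replaced by $\mathit{true}$.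
   Context: Situation calculus: a many-sorted language $\mathcal{L}$ with sorts action, situation, object; $do(a,s)$ is the successor of $s$ under action $a$, and for $\alpha=[a_1,\ldots,a_k]$, $do(\alpha,s)$ is $do(a_k,do(\ldots,do(a_1,s)\ldots))$; $S_0$ is the actual initial situation; $\mathit{Init}(s) \doteq \neg\exists a,s'.\, s = do(a,s')$; $\iota,\iota'$ range over initial situations. $f_1,\ldots,f_n$ are all the fluents, each taking only a situation argument and values in a finite set; $\vec x$ ranges over value vectors, $i$ over $1..n$. $\phi[s]$ restores situation argument $s$ in $\phi$. $\langle z.\ \psi \to t\rangle = u$ abbreviates $[(\exists z\psi)\supset \forall z(\psi \supset u = t)] \land [(\neg\exists z\psi) \supset u = 0]$. Distinguished symbols: $\mathit{Poss}(a,s)$, $p(s',s)$ (weight of $s'$ when in $s$), $l(a,s)$ (likelihood). A basic action theory consists of $\mathcal{D}_0$ containing (P1) $\forall \iota,s.\ p(s,\iota) \ge 0 \land (p(s,\iota) > 0 \supset \mathit{Init}(s))$; precondition axioms; successor state axioms including (P2) $p(s',do(a,s)) = u \equiv \exists s''[s' = do(a,s'') \land \mathit{Poss}(a,s'') \land u = p(s'',s)\times l(a,s'')] \lor \neg\exists s''[s'=do(a,s'')\land \mathit{Poss}(a,s'')] \land u = 0$; likelihood axioms; foundational axioms. Entailment is over $\mathbb{R}$-interpretations. Finite sums are abbreviations for second-order formulas. *)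

theory Defs
  imports Complex_Main "HOL-Library.FuncSet"
begin

text \<open>Semantic rendering of an R-interpretation of the situation calculus.
  Fluents are f 0, ..., f (n-1) (the paper's f_1..f_n), fluent i has values in
  the finite set D i.\<close>

definition Init :: "('a \<Rightarrow> 's \<Rightarrow> 's) \<Rightarrow> 's \<Rightarrow> bool" where
  "Init do s \<longleftrightarrow> \<not> (\<exists>a s'. s = do a s')"

definition doSeq :: "('a \<Rightarrow> 's \<Rightarrow> 's) \<Rightarrow> 'a list \<Rightarrow> 's \<Rightarrow> 's" where
  "doSeq do as s = foldl (\<lambda>s' a. do a s') s as"

text \<open>The vector of fluent values at situation s (a situation-suppressed formula
  phi, with situation s restored, is a property of this vector).\<close>
definition fvec :: "nat \<Rightarrow> (nat \<Rightarrow> 's \<Rightarrow> 'v) \<Rightarrow> 's \<Rightarrow> (nat \<Rightarrow> 'v)" where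
  "fvec n f s = restrict (\<lambda>i. f i s) {..<n}"

definition foundational :: "('a \<Rightarrow> 's \<Rightarrow> 's) \<Rightarrow> 's \<Rightarrow> bool" where
  "foundational do S0 \<longleftrightarrow>
     (\<forall>a1 a2 s1 s2. do a1 s1 = do a2 s2 \<longrightarrow> a1 = a2 \<and> s1 = s2) \<and>
     (\<forall>P. (\<forall>s. Init do s \<longrightarrow> P s) \<and> (\<forall>a s. P s \<longrightarrow> P (do a s)) \<longrightarrow> (\<forall>s. P s)) \<and>
     Init do S0"

definition axP1 :: "('a \<Rightarrow> 's \<Rightarrow> 's) \<Rightarrow> ('s \<Rightarrow> 's \<Rightarrow> real) \<Rightarrow> bool" where
  "axP1 do p \<longleftrightarrow> (\<forall>\<iota> s. Init do \<iota> \<longrightarrow> p s \<iota> \<ge> 0 \<and> (p s \<iota> > 0 \<longrightarrow> Init do s))"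

definition axP2 :: "('a \<Rightarrow> 's \<Rightarrow> 's) \<Rightarrow> ('a \<Rightarrow> 's \<Rightarrow> bool) \<Rightarrow> ('s \<Rightarrow> 's \<Rightarrow> real)
    \<Rightarrow> ('a \<Rightarrow> 's \<Rightarrow> real) \<Rightarrow> bool" where
  "axP2 do Poss p l \<longleftrightarrow> (\<forall>s' a s u. p s' (do a s) = u \<longleftrightarrow>
     ((\<exists>s''. s' = do a s'' \<and> Poss a s'' \<and> u = p s'' s * l a s'') \<or>
      (\<not> (\<exists>s''. s' = do a s'' \<and> Poss a s'') \<and> u = 0)))"

text \<open>A model of a basic action theory: foundational axioms, (P1), (P2),
  fluents with values in finite sets, and precondition, successor state and
  likelihood axioms whose right-hand sides are uniform in s (hence depend on s
  only through the fluent values at s).\<close>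
definition BAT_model :: "('a \<Rightarrow> 's \<Rightarrow> 's) \<Rightarrow> 's \<Rightarrow> ('a \<Rightarrow> 's \<Rightarrow> bool) \<Rightarrow> ('s \<Rightarrow> 's \<Rightarrow> real)
    \<Rightarrow> ('a \<Rightarrow> 's \<Rightarrow> real) \<Rightarrow> nat \<Rightarrow> (nat \<Rightarrow> 's \<Rightarrow> 'v) \<Rightarrow> (nat \<Rightarrow> 'v set) \<Rightarrow> bool" where
  "BAT_model do S0 Poss p l n f D \<longleftrightarrow>
     foundational do S0 \<and> axP1 do p \<and> axP2 do Poss p l \<and>
     (\<forall>i<n. finite (D i) \<and> (\<forall>s. f i s \<in> D i)) \<and>
     (\<exists>Pi. \<forall>a s. Poss a s = Pi a (fvec n f s)) \<and>
     (\<exists>F. \<forall>i<n. \<forall>a s. f i (do a s) = F i a (fvec n f s)) \<and>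
     (\<exists>L. \<forall>a s. l a s = L a (fvec n f s))"

definition axStar :: "('a \<Rightarrow> 's \<Rightarrow> 's) \<Rightarrow> nat \<Rightarrow> (nat \<Rightarrow> 's \<Rightarrow> 'v) \<Rightarrow> (nat \<Rightarrow> 'v set) \<Rightarrow> bool" where
  "axStar do n f D \<longleftrightarrow>
     (\<forall>x \<in> PiE {..<n} D. \<exists>\<iota>. Init do \<iota> \<and> (\<forall>i<n. f i \<iota> = x i)) \<and>
     (\<forall>\<iota> \<iota>'. Init do \<iota> \<and> Init do \<iota>' \<and> (\<forall>i<n. f i \<iota> = f i \<iota>') \<longrightarrow> \<iota> = \<iota>')"

definition cond_term :: "('z \<Rightarrow> bool) \<Rightarrow> ('z \<Rightarrow> real) \<Rightarrow> real \<Rightarrow> bool" where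
  "cond_term \<psi> t u \<longleftrightarrow>
     ((\<exists>z. \<psi> z) \<longrightarrow> (\<forall>z. \<psi> z \<longrightarrow> u = t z)) \<and> ((\<not> (\<exists>z. \<psi> z)) \<longrightarrow> u = 0)"

text \<open>Sum over {s' : phi[s']} of p(s', S): the finite sum over those s' satisfying
  phi with nonzero weight.\<close>
definition sitSum :: "('s \<Rightarrow> 's \<Rightarrow> real) \<Rightarrow> ('s \<Rightarrow> bool) \<Rightarrow> 's \<Rightarrow> real" where
  "sitSum p P S = (\<Sum>s' \<in> {s'. P s' \<and> p s' S \<noteq> 0}. p s' S)"

definition vecTerm :: "('a \<Rightarrow> 's \<Rightarrow> 's) \<Rightarrow> 's \<Rightarrow> ('s \<Rightarrow> 's \<Rightarrow> real) \<Rightarrow> nat \<Rightarrow> (nat \<Rightarrow> 's \<Rightarrow> 'v)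
    \<Rightarrow> ((nat \<Rightarrow> 'v) \<Rightarrow> bool) \<Rightarrow> 'a list \<Rightarrow> (nat \<Rightarrow> 'v) \<Rightarrow> real \<Rightarrow> bool" where
  "vecTerm do S0 p n f \<phi> \<alpha> x u \<longleftrightarrow>
     cond_term (\<lambda>\<iota>. Init do \<iota> \<and> (\<forall>i<n. f i \<iota> = x i) \<and> \<phi> (fvec n f (doSeq do \<alpha> \<iota>)))
               (\<lambda>\<iota>. p (doSeq do \<alpha> \<iota>) (doSeq do \<alpha> S0)) u"

end

theory Submission
  imports Defs
begin

lemma doSeq_snoc: "doSeq do (xs @ [a]) s = do a (doSeq do xs s)"
  by (simp add: doSeq_def)

lemma doSeq_inj:
  assumes "\<forall>a1 a2 s1 s2. do a1 s1 = do a2 s2 \<longrightarrow> a1 = a2 \<and> s1 = s2"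
  shows "doSeq do xs s1 = doSeq do xs s2 \<Longrightarrow> s1 = s2"
proof (induction xs rule: rev_induct)
  case Nil then show ?case by (simp add: doSeq_def)
next
  case (snoc a xs) then show ?case using assms by (simp add: doSeq_snoc)
qed

lemma support:
  assumes P1: "axP1 do p" and P2: "axP2 do Poss p l" and S0: "Init do S0"
  shows "p s' (doSeq do xs S0) \<noteq> 0 \<Longrightarrow> \<exists>\<iota>. Init do \<iota> \<and> s' = doSeq do xs \<iota>"
proof (induction xs arbitrary: s' rule: rev_induct)
  case Nil
  then have "p s' S0 \<noteq> 0" by (simp add: doSeq_def)
  with P1 S0 have "Init do s'" unfolding axP1_def by force
  then show ?case by (auto simp: doSeq_def)
next
  case (snoc a xs)
  let ?T = "doSeq do xs S0"
  have "p s' (do a ?T) = p s' (do a ?T)" by simp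
  then have "(\<exists>s''. s' = do a s'' \<and> Poss a s'' \<and> p s' (do a ?T) = p s'' ?T * l a s'') \<or>
      (\<not> (\<exists>s''. s' = do a s'' \<and> Poss a s'') \<and> p s' (do a ?T) = 0)"
    using P2 unfolding axP2_def by blast
  moreover have "p s' (do a ?T) \<noteq> 0" using snoc.prems by (simp add: doSeq_snoc)
  ultimately obtain s'' where s'': "s' = do a s''" "p s'' ?T \<noteq> 0" by force
  from snoc.IH[OF s''(2)] obtain \<iota> where "Init do \<iota>" "s'' = doSeq do xs \<iota>" by blast
  then show ?case using s'' by (auto simp: doSeq_snoc)
qed

theorem mainTheorem11:
  fixes do :: "'a \<Rightarrow> 's \<Rightarrow> 's" and S0 :: 's and Poss :: "'a \<Rightarrow> 's \<Rightarrow> bool"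
    and p :: "'s \<Rightarrow> 's \<Rightarrow> real" and l :: "'a \<Rightarrow> 's \<Rightarrow> real"
    and n :: nat and f :: "nat \<Rightarrow> 's \<Rightarrow> 'v" and D :: "nat \<Rightarrow> 'v set"
    and \<phi> :: "(nat \<Rightarrow> 'v) \<Rightarrow> bool" and \<alpha> :: "'a list"
  assumes "BAT_model do S0 Poss p l n f D"
    and "axStar do n f D"
  shows "(\<exists>U. \<forall>x \<in> PiE {..<n} D. vecTerm do S0 p n f \<phi> \<alpha> x (U x)) \<and>
         (\<exists>U'. \<forall>x \<in> PiE {..<n} D. vecTerm do S0 p n f (\<lambda>_. True) \<alpha> x (U' x)) \<and>
         (\<forall>U U'. (\<forall>x \<in> PiE {..<n} D. vecTerm do S0 p n f \<phi> \<alpha> x (U x)) \<and>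
                 (\<forall>x \<in> PiE {..<n} D. vecTerm do S0 p n f (\<lambda>_. True) \<alpha> x (U' x)) \<longrightarrow>
            sitSum p (\<lambda>s'. \<phi> (fvec n f s')) (doSeq do \<alpha> S0)
              / sitSum p (\<lambda>s'. True) (doSeq do \<alpha> S0)
            = (\<Sum>x \<in> PiE {..<n} D. U x) / (\<Sum>x \<in> PiE {..<n} D. U' x))"
proof -
  have fd: "foundational do S0" and P1: "axP1 do p" and P2: "axP2 do Poss p l"
    and fin: "\<forall>i<n. finite (D i) \<and> (\<forall>s. f i s \<in> D i)"
    using assms(1) unfolding BAT_model_def by auto
  have injdo: "\<forall>a1 a2 s1 s2. do a1 s1 = do a2 s2 \<longrightarrow> a1 = a2 \<and> s1 = s2"
    and S0: "Init do S0" using fd unfolding foundational_def by auto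
  have ex: "\<forall>x \<in> PiE {..<n} D. \<exists>\<iota>. Init do \<iota> \<and> (\<forall>i<n. f i \<iota> = x i)"
    and uq: "\<And>\<iota> \<iota>'. Init do \<iota> \<Longrightarrow> Init do \<iota>' \<Longrightarrow> (\<forall>i<n. f i \<iota> = f i \<iota>') \<Longrightarrow> \<iota> = \<iota>'"
    using assms(2) unfolding axStar_def by blast+
  define I where "I = {\<iota>. Init do \<iota>}"
  define S where "S = doSeq do \<alpha> S0"
  define g where "g = doSeq do \<alpha>"
  have bij: "bij_betw (fvec n f) I (PiE {..<n} D)"
    unfolding bij_betw_def
  proof
    show "inj_on (fvec n f) I"
    proof (rule inj_onI)
      fix x y assume "x \<in> I" "y \<in> I" "fvec n f x = fvec n f y"
      then show "x = y" using uq unfolding I_def fvec_def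
        by (metis lessThan_iff restrict_apply' mem_Collect_eq)
    qed
    show "fvec n f ` I = PiE {..<n} D"
    proof
      show "fvec n f ` I \<subseteq> PiE {..<n} D" using fin by (auto simp: fvec_def PiE_def)
      show "PiE {..<n} D \<subseteq> fvec n f ` I"
      proof
        fix x assume x: "x \<in> PiE {..<n} D"
        then obtain \<iota> where "Init do \<iota>" "\<forall>i<n. f i \<iota> = x i" using ex by blast
        moreover have "fvec n f \<iota> = x"
          using x calculation(2) unfolding fvec_def by (auto simp: PiE_def extensional_def)
        ultimately show "x \<in> fvec n f ` I" unfolding I_def by blast
      qed
    qed
  qed
  have finPi: "finite (PiE {..<n} D)" using fin by (intro finite_PiE) auto
  have finI: "finite I" using bij finPi bij_betw_finite by blast
  have ginj: "inj_on g I" unfolding g_def by (meson doSeq_inj injdo inj_onI)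
  have LHS: "sitSum p (\<lambda>s'. Q (fvec n f s')) S
      = (\<Sum>\<iota>\<in>I. if Q (fvec n f (g \<iota>)) then p (g \<iota>) S else 0)" for Q
  proof -
    let ?C = "\<lambda>\<iota>. Q (fvec n f (g \<iota>)) \<and> p (g \<iota>) S \<noteq> 0"
    have eq: "{s'. Q (fvec n f s') \<and> p s' S \<noteq> 0} = g ` {\<iota>\<in>I. ?C \<iota>}"
    proof
      show "{s'. Q (fvec n f s') \<and> p s' S \<noteq> 0} \<subseteq> g ` {\<iota>\<in>I. ?C \<iota>}"
      proof
        fix s' assume s': "s' \<in> {s'. Q (fvec n f s') \<and> p s' S \<noteq> 0}"
        then obtain \<iota> where "Init do \<iota>" "s' = g \<iota>"
          using support[OF P1 P2 S0] unfolding S_def g_def by blast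
        then show "s' \<in> g ` {\<iota>\<in>I. ?C \<iota>}" using s' unfolding I_def by auto
      qed
    qed auto
    have "sitSum p (\<lambda>s'. Q (fvec n f s')) S = (\<Sum>\<iota>\<in>{\<iota>\<in>I. ?C \<iota>}. p (g \<iota>) S)"
      unfolding sitSum_def eq
      by (rule sum.reindex[unfolded comp_def]) (rule inj_on_subset[OF ginj], auto)
    also have "\<dots> = (\<Sum>\<iota>\<in>I. if ?C \<iota> then p (g \<iota>) S else 0)"
      using finI by (rule sum.inter_filter)
    also have "\<dots> = (\<Sum>\<iota>\<in>I. if Q (fvec n f (g \<iota>)) then p (g \<iota>) S else 0)"
      by (rule sum.cong) auto
    finally show ?thesis .
  qed
  have Uval: "U (fvec n f \<iota>) = (if Q (fvec n f (g \<iota>)) then p (g \<iota>) S else 0)"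
    if U: "\<forall>x \<in> PiE {..<n} D. vecTerm do S0 p n f Q \<alpha> x (U x)" and \<iota>: "\<iota> \<in> I" for U Q \<iota>
  proof -
    have "fvec n f \<iota> \<in> PiE {..<n} D" using bij \<iota> bij_betwE by blast
    then have ct: "cond_term (\<lambda>z. Init do z \<and> (\<forall>i<n. f i z = fvec n f \<iota> i) \<and> Q (fvec n f (g z)))
        (\<lambda>z. p (g z) S) (U (fvec n f \<iota>))"
      using U unfolding vecTerm_def g_def S_def by blast
    have ii: "Init do \<iota>" "\<forall>i<n. f i \<iota> = fvec n f \<iota> i" using \<iota> by (auto simp: I_def fvec_def)
    show ?thesis
    proof (cases "Q (fvec n f (g \<iota>))")
      case True then show ?thesis using ct ii unfolding cond_term_def by auto
    next
      case False
      have "\<not> (\<exists>z. Init do z \<and> (\<forall>i<n. f i z = fvec n f \<iota> i) \<and> Q (fvec n f (g z)))"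
      proof
        assume "\<exists>z. Init do z \<and> (\<forall>i<n. f i z = fvec n f \<iota> i) \<and> Q (fvec n f (g z))"
        then obtain z where z: "Init do z" "\<forall>i<n. f i z = f i \<iota>" "Q (fvec n f (g z))"
          using ii by auto
        then have "z = \<iota>" using uq ii by blast
        then show False using z False by simp
      qed
      then show ?thesis using ct False unfolding cond_term_def by auto
    qed
  qed
  have RHS: "(\<Sum>x \<in> PiE {..<n} D. U x) = (\<Sum>\<iota>\<in>I. if Q (fvec n f (g \<iota>)) then p (g \<iota>) S else 0)"
    if U: "\<forall>x \<in> PiE {..<n} D. vecTerm do S0 p n f Q \<alpha> x (U x)" for U Q
  proof -
    have "(\<Sum>x \<in> PiE {..<n} D. U x) = (\<Sum>\<iota>\<in>I. U (fvec n f \<iota>))"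
      using sum.reindex_bij_betw[OF bij, of U] by simp
    also have "\<dots> = (\<Sum>\<iota>\<in>I. if Q (fvec n f (g \<iota>)) then p (g \<iota>) S else 0)"
      by (rule sum.cong[OF refl], rule Uval[OF U])
    finally show ?thesis .
  qed
  have EX: "\<exists>U. \<forall>x \<in> PiE {..<n} D. vecTerm do S0 p n f Q \<alpha> x (U x)" for Q
  proof -
    let ?\<psi> = "\<lambda>x z. Init do z \<and> (\<forall>i<n. f i z = x i) \<and> Q (fvec n f (doSeq do \<alpha> z))"
    let ?U = "\<lambda>x. if \<exists>z. ?\<psi> x z then p (doSeq do \<alpha> (SOME z. ?\<psi> x z)) (doSeq do \<alpha> S0) else 0"
    have VT: "vecTerm do S0 p n f Q \<alpha> x (?U x)" for x
    proof -
      have un: "z = (SOME z. ?\<psi> x z)" if "?\<psi> x z" for z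
      proof -
        have "?\<psi> x (SOME z. ?\<psi> x z)" using that by (rule someI)
        then show ?thesis using that uq[of z "SOME z. ?\<psi> x z"] by simp
      qed
      show ?thesis unfolding vecTerm_def cond_term_def
      proof (intro conjI impI allI)
        fix z assume z: "?\<psi> x z"
        then have "\<exists>z. ?\<psi> x z" by blast
        then have "?U x = p (doSeq do \<alpha> (SOME z. ?\<psi> x z)) (doSeq do \<alpha> S0)" by (simp only: if_True)
        then show "?U x = p (doSeq do \<alpha> z) (doSeq do \<alpha> S0)" using un[OF z] by simp
      next
        assume "\<not> (\<exists>z. ?\<psi> x z)"
        then show "?U x = 0" by (simp only: if_False)
      qed
    qed
    show ?thesis
      by (rule exI[of _ ?U], rule ballI, rule VT)
  qed
  show ?thesis
  proof (intro conjI EX allI impI)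
    fix U U' assume H: "(\<forall>x \<in> PiE {..<n} D. vecTerm do S0 p n f \<phi> \<alpha> x (U x)) \<and>
                 (\<forall>x \<in> PiE {..<n} D. vecTerm do S0 p n f (\<lambda>_. True) \<alpha> x (U' x))"
    have a: "sitSum p (\<lambda>s'. \<phi> (fvec n f s')) S = (\<Sum>x \<in> PiE {..<n} D. U x)"
      using LHS[of \<phi>] RHS[where U=U and Q=\<phi>, OF conjunct1[OF H]] by (simp only:)
    have b: "sitSum p (\<lambda>s'. True) S = (\<Sum>x \<in> PiE {..<n} D. U' x)"
      using LHS[of "\<lambda>_. True"] RHS[where U=U' and Q="\<lambda>_. True", OF conjunct2[OF H]] by simp
    show "sitSum p (\<lambda>s'. \<phi> (fvec n f s')) (doSeq do \<alpha> S0)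
              / sitSum p (\<lambda>s'. True) (doSeq do \<alpha> S0)
            = (\<Sum>x \<in> PiE {..<n} D. U x) / (\<Sum>x \<in> PiE {..<n} D. U' x)"
      using a b unfolding S_def by simp
  qed
qed

end
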